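(* If $B\ge0.287$, then the maximum of $x\mapsto|\Delta(x+iB)|$ over $x\in[-\tfrac12,\tfrac12]$ is attained at $x=\tfrac12$ (and, by symmetry, at $x=-\tfrac12$).
   Context: $q=e^{2\pi iz}$ and $\Delta(z)=q\prod_{n\ge1}(1-q^n)^{24}$ is the modular discriminant. *)

theory Defs
  imports "HOL-Analysis.Analysis"
begin

definition qnome :: "complex \<Rightarrow> complex" where
  "qnome z = exp (2 * of_real pi * \<i> * z)"

definition modular_Delta :: "complex \<Rightarrow> complex" where
  "modular_Delta z = qnome z * (\<Prod>n. (1 - qnome z ^ (Suc n)) ^ 24)"

end

theory Submission
  imports Defs
begin


lemma sin_mult_bound: "\<bar>sin (real n * x)\<bar> \<le> real n * \<bar>sin x\<bar>"
proof (induction n)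
  case 0 then show ?case by simp
next
  case (Suc n)
  have "sin (real (Suc n) * x) = sin (real n * x) * cos x + cos (real n * x) * sin x"
    by (simp add: distrib_right sin_add)
  also have "\<bar>\<dots>\<bar> \<le> \<bar>sin (real n * x)\<bar> + \<bar>sin x\<bar>"
  proof -
    have "\<bar>sin (real n * x) * cos x\<bar> \<le> \<bar>sin (real n * x)\<bar>"
      by (simp add: abs_mult mult_left_le)
    moreover have "\<bar>cos (real n * x) * sin x\<bar> \<le> \<bar>sin x\<bar>"
      by (simp add: abs_mult mult_left_le_one_le)
    ultimately show ?thesis by (smt (verit) abs_triangle_ineq)
  qed
  finally show ?case using Suc by (simp add: distrib_right)
qed

lemma one_minus_cos_mult: "1 - cos (real n * x) \<le> (real n)^2 * (1 - cos x)"
proof -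
  have e1: "1 - cos (real n * x) = 2 * sin (real n * (x/2))^2"
    using cos_double_sin[of "real n * (x/2)"] by simp
  have e2: "1 - cos x = 2 * sin (x/2)^2"
    using cos_double_sin[of "x/2"] by simp
  have "sin (real n * (x/2))^2 \<le> (real n * \<bar>sin (x/2)\<bar>)^2"
    using sin_mult_bound[of n "x/2"] by (metis abs_ge_zero power2_abs power_mono)
  then show ?thesis unfolding e1 e2 by (simp add: power_mult_distrib)
qed

lemma alt_cos_bound: "(-1)^n - cos (real n * t) \<le> (real n)^2 * (1 + cos t)"
proof -
  define p where "p = t - pi"
  have t: "t = p + pi" by (simp add: p_def)
  have c1: "cos (real n * t) = (-1)^n * cos (real n * p)"
    unfolding t by (simp add: distrib_left cos_add)
  have c2: "1 + cos t = 1 - cos p" unfolding t by (simp add: cos_add)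
  have "(-1::real)^n * (1 - cos (real n * p)) \<le> 1 - cos (real n * p)"
    by (cases "even n") auto
  then show ?thesis using one_minus_cos_mult[of n p] unfolding c1 c2
    by (simp add: algebra_simps)
qed

lemma normsq: "(cmod (1 - complex_of_real \<rho> * cis \<phi>))^2 = 1 - 2 * \<rho> * cos \<phi> + \<rho>^2"
proof -
  have "(cmod (1 - complex_of_real \<rho> * cis \<phi>))^2 = (1 - \<rho> * cos \<phi>)^2 + (\<rho> * sin \<phi>)^2"
    by (simp add: cmod_power2)
  also have "\<dots> = 1 - 2 * \<rho> * cos \<phi> + \<rho>^2 * (sin \<phi>^2 + cos \<phi>^2)"
    by algebra
  finally show ?thesis by simp
qed



lemma key_poly:
  fixes r c :: real
  assumes r0: "0 < r" and r1: "r \<le> 1/6" and c0: "-1 \<le> c" and c1: "c \<le> 1"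
  shows "- r/(1+r)^2 + 2*r^2*(1-c)/(1-r^2)^2 - r^3*(2*c-1)^2/(1+r^3)^2
         + 16*r^4/((1-r)^2*(1-2*r)) \<le> 0"
proof -
  have h1: "r/(1+r)^2 \<ge> r - 2*r^2"
  proof -
    have "(r - 2*r^2) * (1+r)^2 \<le> r"
    proof -
      have "(r - 2*r^2) * (1+r)^2 = r - 3*r^3 - 2*r^4" by (simp add: power2_eq_square power3_eq_cube power4_eq_xxxx algebra_simps)
      moreover have "0 \<le> r^3" "0 \<le> r^4" using r0 by auto
      ultimately show ?thesis by linarith
    qed
    then show ?thesis using r0 by (simp add: pos_le_divide_eq)
  qed
  have h2: "2*r^2*(1-c)/(1-r^2)^2 \<le> (2592/1225) * r^2 * (1-c)"
  proof -
    have "r^2 \<le> (1/6)^2" using r0 r1 by (intro power_mono) auto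
    then have "r^2 \<le> 1/36" by (simp add: power2_eq_square)
    then have "(35/36)^2 \<le> (1-r^2)^2" by (intro power_mono) linarith+
    then have d: "1225/1296 \<le> (1-r^2)^2" by (simp add: power2_eq_square)
    have "0 \<le> 2*r^2*(1-c)" using c1 by simp
    then have "2*r^2*(1-c)/(1-r^2)^2 \<le> 2*r^2*(1-c)/(1225/1296)"
      using d by (intro divide_left_mono) auto
    then show ?thesis by simp
  qed
  have h3: "r^3*(2*c-1)^2/(1+r^3)^2 \<ge> r^3*(2*c-1)^2*(1-2*r^3)"
  proof -
    have p: "0 \<le> r^3*(2*c-1)^2" using r0 by simp
    have "(1-2*r^3)*(1+r^3)^2 \<le> 1"
    proof -
      have "(1-2*r^3)*(1+r^3)^2 = 1 - 3*r^6 - 2*r^9" by (simp add: power2_eq_square algebra_simps flip: power_add)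
      moreover have "0 \<le> r^6" "0 \<le> r^9" using r0 by auto
      ultimately show ?thesis by linarith
    qed
    then have "r^3*(2*c-1)^2*((1-2*r^3)*(1+r^3)^2) \<le> r^3*(2*c-1)^2"
      using p mult_left_le by blast
    moreover have D: "0 < (1+r^3)^2"
    proof -
      have "0 < 1 + r^3" using r0 by (simp add: add_pos_nonneg)
      then show ?thesis by simp
    qed
    ultimately show ?thesis unfolding pos_le_divide_eq[OF D] by (simp add: mult.assoc)
  qed
  have h4: "16*r^4/((1-r)^2*(1-2*r)) \<le> (864/25) * r^4"
  proof -
    have "(5/6)^2 \<le> (1-r)^2" using r1 r0 by (intro power_mono) auto
    then have a: "25/36 \<le> (1-r)^2" by (simp add: power2_eq_square)
    have b: "2/3 \<le> 1-2*r" using r1 by simp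
    have "25/36 * (2/3) \<le> (1-r)^2*(1-2*r)" using a b by (intro mult_mono) auto
    then have "16*r^4/((1-r)^2*(1-2*r)) \<le> 16*r^4/(25/36 * (2/3))"
      using r0 by (intro divide_left_mono) auto
    then show ?thesis by simp
  qed
  define k3 where "k3 = 1 - 2*r^3"
  have k3: "0 \<le> k3" "k3 \<le> 1" using r0 r1 unfolding k3_def
    proof -
    have "r^3 \<le> (1/6)^3" using r0 r1 by (intro power_mono) auto
    then have "r^3 \<le> 1/216" by (simp add: power3_eq_cube)
    moreover have "0 \<le> r^3" using r0 by simp
    ultimately show "0 \<le> 1 - 2*r^3" "1 - 2*r^3 \<le> 1" by linarith+
  qed
  have r3: "r^3 \<le> r^2/6" using r0 r1 by (simp add: power3_eq_cube power2_eq_square)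
  have Q: "(2592/1225) * r^2 * (1-c) - r^3*(2*c-1)^2*k3 \<le> (2592/1225) * r^2 * 2 - 9*r^3*k3"
  proof -
    have "(2592/1225) * r^2 * 2 - 9*r^3*k3 - ((2592/1225) * r^2 * (1-c) - r^3*(2*c-1)^2*k3)
        = (1+c) * ((2592/1225)*r^2 - 4*k3*r^3*(2-c))"
      by (simp add: power2_eq_square power3_eq_cube field_simps)
    moreover have "4*k3*r^3*(2-c) \<le> 12 * r^3"
    proof -
      have "k3*(2-c) \<le> 1*3" using k3 c0 c1 by (intro mult_mono) auto
      then have "r^3*(k3*(2-c)) \<le> r^3*3" using r0 by (intro mult_left_mono) auto
      then show ?thesis by (simp add: algebra_simps)
    qed
    moreover have "12 * r^3 \<le> 2*r^2" using r3 by simp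
    moreover have "0 \<le> (1+c) * ((2592/1225)*r^2 - 4*k3*r^3*(2-c))"
    proof -
      have "0 \<le> r^2" by simp
      then have "4*k3*r^3*(2-c) \<le> (2592/1225)*r^2" using calculation by linarith
      then show ?thesis using c0 by (intro mult_nonneg_nonneg) auto
    qed
    ultimately show ?thesis by linarith
  qed
  have r4: "r^4 \<le> r^3/6" using r0 r1 by (simp add: power3_eq_cube power4_eq_xxxx)
  have r6: "r^6 \<le> r^3/216"
  proof -
    have "r^3 \<le> (1/6)^3" using r0 r1 by (intro power_mono) auto
    then have "r^3 \<le> 1/216" by (simp add: power3_eq_cube)
    then have "r^3*r^3 \<le> r^3 * (1/216)" using r0 by (intro mult_left_mono) auto
    then show ?thesis by (simp flip: power_add)
  qed
  have "- r/(1+r)^2 + 2*r^2*(1-c)/(1-r^2)^2 - r^3*(2*c-1)^2/(1+r^3)^2 + 16*r^4/((1-r)^2*(1-2*r))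
      \<le> -(r - 2*r^2) + ((2592/1225) * r^2 * (1-c) - r^3*(2*c-1)^2*k3) + (864/25)*r^4"
    using h1 h2 h3 h4 unfolding k3_def by simp
  also have "\<dots> \<le> -(r - 2*r^2) + ((2592/1225) * r^2 * 2 - 9*r^3*k3) + (864/25)*r^4"
    using Q by simp
  also have "\<dots> = -r + (2 + 5184/1225)*r^2 - 9*r^3 + 18*r^6 + (864/25)*r^4"
    unfolding k3_def by (simp add: algebra_simps flip: power_add)
  also have "\<dots> \<le> -r + (2 + 5184/1225)*r^2 - 9*r^3 + r^3/12 + (864/25)*(r^3/6)"
    using r4 r6 by simp
  also have "\<dots> \<le> 0"
  proof -
    define A :: real where "A = 2 + 5184/1225"
    define B :: real where "B = 9 - 1/12 - (864/25)/6"
    define f16 :: real where "f16 = -1 + A/6 - B/36"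
    have f16: "f16 < 0" unfolding f16_def A_def B_def by simp
    have X: "0 \<le> r * ((1/6 - r) * (A - B*(r+1/6)))"
      using r0 r1 unfolding A_def B_def by (intro mult_nonneg_nonneg) auto
    have "-r + (2 + 5184/1225)*r^2 - 9*r^3 + r^3/12 + (864/25)*(r^3/6)
        = r * f16 - r * ((1/6 - r) * (A - B*(r+1/6)))"
      unfolding A_def B_def f16_def by (simp add: power2_eq_square power3_eq_cube field_simps)
    moreover have "r * f16 \<le> 0" using r0 f16 by (simp add: mult_nonneg_nonpos less_imp_le)
    ultimately show ?thesis using X by linarith
  qed
  finally show ?thesis .
qed



definition bb :: "real \<Rightarrow> real \<Rightarrow> nat \<Rightarrow> real" where
  "bb r t n = 1 - 2 * r^n * cos (real n * t) + r^(2*n)"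

lemma bb_pi: "bb r pi n = (1 - (-r)^n)^2"
proof -
  have 2: "r^(2*n) = (r^n)^2" by (rule power_even_eq)
  show ?thesis
  proof (cases "even n")
    case True
    then have a: "(-r)^n = r^n" and b: "cos (real n * pi) = 1" by simp_all
    have "(1 - r^n)^2 = 1 - 2 * r^n + (r^n)^2" by (simp add: power2_diff)
    then show ?thesis unfolding bb_def a b 2 by simp
  next
    case False
    then have a: "(-r)^n = -(r^n)" and b: "cos (real n * pi) = -1" by simp_all
    have "(1 + r^n)^2 = 1 + 2 * r^n + (r^n)^2" by (simp add: power2_sum)
    then show ?thesis unfolding bb_def a b 2 by simp
  qed
qed

lemma bb_nonneg: assumes "0 \<le> r" shows "0 \<le> bb r t n"
proof -
  have "r^n * cos (real n * t) \<le> r^n" using assms by (simp add: mult_left_le)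
  moreover have "(1 - r^n)^2 = 1 - 2 * r^n + r^(2*n)"
  proof -
    have "r^(2*n) = (r^n)^2" by (rule power_even_eq)
    then show ?thesis by (simp add: power2_eq_square algebra_simps)
  qed
  ultimately have "(1 - r^n)^2 \<le> bb r t n" unfolding bb_def by linarith
  moreover have "0 \<le> (1 - r^n)^2" by simp
  ultimately show ?thesis by linarith
qed

lemma bb_pi_ge: assumes "0 \<le> r" "r < 1" "n \<ge> 1" shows "(1-r)^2 \<le> bb r pi n"
proof -
  have a: "r^n \<le> r^1" using assms by (intro power_decreasing) auto
  have "\<bar>(-r)^n\<bar> = r^n" using assms(1) by (simp add: power_abs)
  with a have "\<bar>(-r)^n\<bar> \<le> r" by simp
  then have "1 - r \<le> 1 - (-r)^n" by linarith
  moreover have "0 \<le> 1 - r" using assms by simp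
  ultimately have "(1-r)^2 \<le> (1 - (-r)^n)^2" by (rule power_mono)
  then show ?thesis unfolding bb_pi .
qed

lemma y_eq: "bb r t n - bb r pi n = 2 * r^n * ((-1)^n - cos (real n * t))"
  unfolding bb_def by (simp add: algebra_simps)

lemma sq_le_pow2: "4 \<le> n \<Longrightarrow> n^2 \<le> (2::nat)^n"
proof (induction n rule: nat_induct_at_least)
  case base then show ?case by simp
next
  case (Suc n)
  have "(Suc n)^2 = n^2 + 2*n + 1" by (simp add: power2_eq_square)
  also have "\<dots> \<le> n^2 + n^2"
  proof -
    have "4*n \<le> n*n" using Suc(1) by (intro mult_le_mono1)
    then have "2*n + 1 \<le> n*n" using Suc(1) by linarith
    then show ?thesis by (simp add: power2_eq_square)
  qed
  also have "\<dots> \<le> 2^n + 2^n" using Suc(2) by simp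
  finally show ?case by simp
qed

lemma tail_term:
  assumes r0: "0 < r" and r1: "r \<le> 1/6" and n: "4 \<le> n"
  shows "(bb r t n - bb r pi n) / bb r pi n \<le> 2 * (1 + cos t) * (2*r)^n / (1-r)^2"
proof -
  define s where "s = 1 + cos t"
  have s0: "0 \<le> s" unfolding s_def using cos_ge_minus_one[of t] by linarith
  have "(-1)^n - cos (real n * t) \<le> (real n)^2 * s"
    unfolding s_def by (rule alt_cos_bound)
  also have "\<dots> \<le> 2^n * s"
  proof -
    have "n^2 \<le> (2::nat)^n" using n by (rule sq_le_pow2)
    then have "real (n^2) \<le> real ((2::nat)^n)" by (simp only: of_nat_le_iff)
    then have "(real n)^2 \<le> 2^n" by simp
    then show ?thesis using s0 by (intro mult_right_mono) auto
  qed
  finally have "2 * r^n * ((-1)^n - cos (real n * t)) \<le> 2 * r^n * (2^n * s)"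
    using r0 by (intro mult_left_mono) auto
  then have y: "bb r t n - bb r pi n \<le> 2 * s * (2*r)^n"
    unfolding y_eq by (simp add: power_mult_distrib algebra_simps)
  have Y: "0 \<le> 2 * s * (2*r)^n" using s0 r0 by simp
  have a: "(1-r)^2 \<le> bb r pi n" using r0 r1 n by (intro bb_pi_ge) auto
  have a0: "0 < (1-r)^2" using r1 by simp
  have a1: "0 < bb r pi n" using a a0 by linarith
  have "(bb r t n - bb r pi n) / bb r pi n \<le> 2 * s * (2*r)^n / bb r pi n"
    using y a1 by (intro divide_right_mono) auto
  also have "\<dots> \<le> 2 * s * (2*r)^n / (1-r)^2"
    using Y a a0 a1 by (intro divide_left_mono mult_pos_pos) auto
  finally show ?thesis unfolding s_def .
qed

lemma geo_tail:
  fixes x :: real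
  assumes "0 \<le> x" "x < 1"
  shows "(\<Sum>n=4..N. x^n) \<le> x^4 / (1 - x)"
proof -
  have "(\<Sum>n=4..N. x^n) = (if N < 4 then 0 else (x^4 - x^Suc N) / (1 - x))"
    using sum_gp[of x 4 N] assms by auto
  also have "\<dots> \<le> x^4 / (1 - x)"
  proof -
    have "(x^4 - x^Suc N) / (1 - x) \<le> x^4 / (1 - x)"
      using assms by (intro divide_right_mono) auto
    moreover have "0 \<le> x^4 / (1 - x)" using assms by simp
    ultimately show ?thesis by simp
  qed
  finally show ?thesis .
qed

lemma sum_bound:
  assumes r0: "0 < r" and r1: "r \<le> 1/6" and N: "3 \<le> N"
  shows "(\<Sum>n=1..N. (bb r t n - bb r pi n) / bb r pi n) \<le> 0"
proof -
  define c where "c = cos t"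
  define s where "s = 1 + c"
  define f where "f = (\<lambda>n. (bb r t n - bb r pi n) / bb r pi n)"
  have c0: "-1 \<le> c" "c \<le> 1" unfolding c_def by auto
  have s0: "0 \<le> s" unfolding s_def using c0 by simp
  have split: "{1..N} = {1,2,3} \<union> {4..N}" using N by auto
  have "sum f {1..N} = sum f {1,2,3} + sum f {4..N}"
    unfolding split by (subst sum.union_disjoint) auto
  also have "sum f {1,2,3} = f 1 + f 2 + f 3" by simp
  finally have S: "sum f {1..N} = f 1 + f 2 + f 3 + sum f {4..N}" .
  have f1: "f 1 = 2* s*(0 - r/(1+r)^2)"
  proof -
    have "bb r pi 1 = (1+r)^2" unfolding bb_pi by simp
    moreover have "bb r t 1 - bb r pi 1 = -2*r* s" unfolding y_eq s_def c_def by (simp add: algebra_simps)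
    ultimately show ?thesis unfolding f_def by simp
  qed
  have f2: "f 2 = 2* s*(2*r^2*(1-c)/(1-r^2)^2)"
  proof -
    have "bb r pi 2 = (1-r^2)^2" unfolding bb_pi by simp
    moreover have "bb r t 2 - bb r pi 2 = 2* s*(2*r^2*(1-c))"
    proof -
      have h: "cos (real 2 * t) = 2*c^2 - 1" unfolding c_def using cos_double_cos[of t] by simp
      have "bb r t 2 - bb r pi 2 = 2 * r^2 * ((-1)^2 - (2*c^2 - 1))"
        using y_eq[of r t 2] unfolding h .
      then show ?thesis unfolding s_def by (simp add: power2_eq_square algebra_simps)
    qed
    ultimately show ?thesis unfolding f_def by simp
  qed
  have f3: "f 3 = 2* s*(-(r^3*(2*c-1)^2/(1+r^3)^2))"
  proof -
    have "bb r pi 3 = (1+r^3)^2" unfolding bb_pi by (simp add: power_minus_odd)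
    moreover have "bb r t 3 - bb r pi 3 = 2* s*(-(r^3*(2*c-1)^2))"
    proof -
      have h: "cos (real 3 * t) = 4*c^3 - 3*c" unfolding c_def using cos_treble_cos[of t] by simp
      have "bb r t 3 - bb r pi 3 = 2 * r^3 * ((-1)^3 - (4*c^3 - 3*c))"
        using y_eq[of r t 3] unfolding h .
      then show ?thesis unfolding s_def by (simp add: power2_eq_square power3_eq_cube algebra_simps)
    qed
    ultimately show ?thesis unfolding f_def by simp
  qed
  have tail: "sum f {4..N} \<le> 2* s*(16*r^4/((1-r)^2*(1-2*r)))"
  proof -
    have "sum f {4..N} \<le> (\<Sum>n=4..N. 2 * s * (2*r)^n / (1-r)^2)"
      unfolding f_def s_def c_def using r0 r1 by (intro sum_mono tail_term) auto
    also have "\<dots> = 2 * s / (1-r)^2 * (\<Sum>n=4..N. (2*r)^n)"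
      by (simp add: sum_distrib_left)
    also have "\<dots> \<le> 2 * s / (1-r)^2 * ((2*r)^4 / (1 - 2*r))"
      using r0 r1 s0 by (intro mult_left_mono geo_tail) auto
    also have "\<dots> = 2* s*(16*r^4/((1-r)^2*(1-2*r)))"
      by (simp add: power_mult_distrib)
    finally show ?thesis .
  qed
  have K: "- r/(1+r)^2 + 2*r^2*(1-c)/(1-r^2)^2 - r^3*(2*c-1)^2/(1+r^3)^2
         + 16*r^4/((1-r)^2*(1-2*r)) \<le> 0"
    using key_poly[OF r0 r1 c0] .
  have "sum f {1..N} \<le> 2* s*(0 - r/(1+r)^2 + 2*r^2*(1-c)/(1-r^2)^2 - r^3*(2*c-1)^2/(1+r^3)^2
         + 16*r^4/((1-r)^2*(1-2*r)))"
    unfolding S f1 f2 f3 using tail by (simp add: algebra_simps)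
  also have "\<dots> \<le> 0" using s0 K by (simp add: mult_nonneg_nonpos)
  finally show ?thesis unfolding f_def .
qed

lemma main_finite:
  assumes r0: "0 < r" and r1: "r \<le> 1/6" and N: "3 \<le> N"
  shows "(\<Prod>n=1..N. bb r t n) \<le> (\<Prod>n=1..N. bb r pi n)"
proof -
  define a where "a = (\<lambda>n. bb r pi n)"
  have apos: "0 < a n" if "n \<in> {1..N}" for n
  proof -
    have "(1-r)^2 \<le> a n" unfolding a_def using that r0 r1 by (intro bb_pi_ge) auto
    moreover have "0 < (1-r)^2" using r1 by simp
    ultimately show ?thesis by linarith
  qed
  have "(\<Prod>n=1..N. bb r t n) \<le> (\<Prod>n=1..N. a n * exp ((bb r t n - a n) / a n))"
  proof (rule prod_mono, safe)
    fix n assume n: "n \<in> {1..N}"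
    show "0 \<le> bb r t n" using r0 by (intro bb_nonneg) auto
    have "bb r t n = a n * (1 + (bb r t n - a n) / a n)" using apos[OF n] by (simp add: field_simps)
    also have "\<dots> \<le> a n * exp ((bb r t n - a n) / a n)"
      using apos[OF n] by (intro mult_left_mono exp_ge_add_one_self) auto
    finally show "bb r t n \<le> a n * exp ((bb r t n - a n) / a n)" .
  qed
  also have "\<dots> = (\<Prod>n=1..N. a n) * exp (\<Sum>n=1..N. (bb r t n - a n) / a n)"
    by (simp add: prod.distrib exp_sum)
  also have "\<dots> \<le> (\<Prod>n=1..N. a n) * 1"
  proof (rule mult_left_mono)
    show "exp (\<Sum>n=1..N. (bb r t n - a n) / a n) \<le> 1"
      using sum_bound[OF r0 r1 N, of t] unfolding a_def by simp
    show "0 \<le> (\<Prod>n=1..N. a n)" using apos by (intro prod_nonneg) (auto intro: less_imp_le)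
  qed
  finally show ?thesis unfolding a_def by simp
qed



lemma exp_18: "6 \<le> exp (1.8::real)"
proof -
  have "(\<Sum>n\<in>{..<8}. (1.8::real)^n /\<^sub>R fact n) \<le> (\<Sum>n. (1.8::real)^n /\<^sub>R fact n)"
    using sums_summable[OF exp_converges[of "1.8::real"]] by (intro sum_le_suminf) auto
  moreover have "(\<Sum>n. (1.8::real)^n /\<^sub>R fact n) = exp 1.8"
    using exp_converges[of "1.8::real"] by (simp add: sums_iff)
  moreover have "6 \<le> (\<Sum>n\<in>{..<8}. (1.8::real)^n /\<^sub>R fact n)"
    by (simp add: lessThan_nat_numeral fact_numeral power_divide)
  ultimately show ?thesis by linarith
qed

lemma r_small:
  assumes "B \<ge> 0.287"
  shows "exp (-2*pi*B) \<le> 1/6"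
proof -
  have "1.8 \<le> 2*pi*B"
  proof -
    have a: "(3.14::real) \<le> 3.141592653588" by simp
    have "3.14 \<le> pi" using a pi_approx(1) by linarith
    then have "2*3.14*0.287 \<le> 2*pi*B" using assms by (intro mult_mono) auto
    then show ?thesis by simp
  qed
  then have "6 \<le> exp (2*pi*B)" using exp_18 by (smt (verit) exp_le_cancel_iff)
  then have "inverse (exp (2*pi*B)) \<le> inverse 6" by (intro le_imp_inverse_le) auto
  then show ?thesis by (simp add: exp_minus)
qed

lemma qnome_polar: "qnome (Complex x B) = complex_of_real (exp (-2*pi*B)) * cis (2*pi*x)"
proof -
  have "2 * of_real pi * \<i> * Complex x B = Complex (-2*pi*B) (2*pi*x)"
    by (simp add: complex_eq_iff)
  then show ?thesis unfolding qnome_def by (simp add: exp_eq_polar)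
qed

lemma norm_one_minus_pow:
  assumes "0 \<le> r"
  shows "norm (1 - (complex_of_real r * cis t)^m)^2 = bb r t m"
proof -
  have pw: "(complex_of_real r * cis t)^m = complex_of_real (r^m) * cis (real m * t)"
    by (simp add: power_mult_distrib Complex.DeMoivre)
  have "r^(2*m) = (r^m)^2" by (rule power_even_eq)
  then show ?thesis unfolding pw normsq bb_def by simp
qed

lemma partial_norm:
  assumes "0 \<le> r"
  shows "norm (\<Prod>i\<le>n. (1 - (complex_of_real r * cis t)^Suc i)^24) = (\<Prod>m=1..Suc n. bb r t m)^12"
proof -
  define q where "q = complex_of_real r * cis t"
  have "norm (\<Prod>i\<le>n. (1 - q^Suc i)^24) = (\<Prod>i\<le>n. norm (1 - q^Suc i)^24)"
    by (simp add: prod_norm[symmetric] norm_power)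
  also have "\<dots> = (\<Prod>i\<le>n. (norm (1 - q^Suc i)^2)^12)"
  proof -
    have e: "a^24 = (a^2)^12" for a :: real
    proof -
      have "a^(2*12) = (a^2)^12" by (rule power_mult)
      then show ?thesis by simp
    qed
    show ?thesis by (simp only: e)
  qed
  also have "\<dots> = (\<Prod>i\<le>n. bb r t (Suc i)^12)"
    unfolding q_def norm_one_minus_pow[OF assms] ..
  also have "\<dots> = (\<Prod>i=0..n. bb r t (Suc i))^12"
    by (simp add: prod_power_distrib atMost_atLeast0)
  also have "(\<Prod>i=0..n. bb r t (Suc i)) = (\<Prod>m=1..Suc n. bb r t m)"
    using prod.shift_bounds_cl_Suc_ivl[of "bb r t" 0 n] by simp
  finally show ?thesis unfolding q_def .
qed

lemma conv_prod:
  fixes q :: complex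
  assumes "norm q < 1"
  shows "convergent_prod (\<lambda>n. (1 - q^Suc n)^24)"
proof -
  have "summable (\<lambda>i. norm q * norm q^i)"
    using assms by (intro summable_mult summable_geometric) auto
  then have "summable (\<lambda>i. norm ((1 - q^Suc i) - 1))"
    by (simp add: norm_power norm_mult)
  then have "abs_convergent_prod (\<lambda>i. 1 - q^Suc i)"
    by (rule summable_imp_abs_convergent_prod)
  then have "convergent_prod (\<lambda>i. 1 - q^Suc i)"
    by (rule abs_convergent_prod_imp_convergent_prod)
  then show ?thesis by (rule convergent_prod_power)
qed

lemma delta_lim:
  assumes "r = exp (-2*pi*B)" and B0: "0 < B"
  shows "(\<lambda>n. r * (\<Prod>m=1..Suc n. bb r (2*pi*x) m)^12) \<longlonglongrightarrow> norm (modular_Delta (Complex x B))"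
proof -
  define q where "q = qnome (Complex x B)"
  have q: "q = complex_of_real r * cis (2*pi*x)" unfolding q_def qnome_polar assms ..
  have r0: "0 < r" unfolding assms by simp
  have nq: "norm q = r" unfolding q using r0 by (simp add: norm_mult)
  have "0 < 2*pi*B" using B0 by simp
  then have "norm q < 1" unfolding nq assms(1) by simp
  have md: "modular_Delta (Complex x B) = q * prodinf (\<lambda>n. (1 - q^Suc n)^24)"
    unfolding modular_Delta_def q_def ..
  have "(\<lambda>n. \<Prod>i\<le>n. (1 - q^Suc i)^24) \<longlonglongrightarrow> prodinf (\<lambda>n. (1 - q^Suc n)^24)"
    using conv_prod[OF \<open>norm q < 1\<close>] by (rule convergent_prod_LIMSEQ)
  then have "(\<lambda>n. norm q * norm (\<Prod>i\<le>n. (1 - q^Suc i)^24))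
      \<longlonglongrightarrow> norm q * norm (prodinf (\<lambda>n. (1 - q^Suc n)^24))"
    by (intro tendsto_mult_left tendsto_norm)
  moreover have "norm (\<Prod>i\<le>n. (1 - q^Suc i)^24) = (\<Prod>m=1..Suc n. bb r (2*pi*x) m)^12" for n
    unfolding q using partial_norm r0 by simp
  ultimately show ?thesis unfolding md by (simp add: norm_mult nq)
qed

lemma bb_minus_pi: "bb r (-pi) m = bb r pi m"
  unfolding bb_def by simp

theorem mainTheorem6:
  fixes B :: real
  assumes "B \<ge> 0.287"
  shows "(\<forall>x\<in>{-1/2..1/2::real}. norm (modular_Delta (Complex x B)) \<le> norm (modular_Delta (Complex (1/2) B)))
       \<and> (\<forall>x\<in>{-1/2..1/2::real}. norm (modular_Delta (Complex x B)) \<le> norm (modular_Delta (Complex (-1/2) B)))"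
proof -
  define r where "r = exp (-2*pi*B)"
  have r0: "0 < r" unfolding r_def by simp
  have B0: "0 < B" using assms by simp
  have r1: "r \<le> 1/6" unfolding r_def using r_small[OF assms] .
  have gen: "norm (modular_Delta (Complex x B)) \<le> norm (modular_Delta (Complex y B))"
    if y: "bb r (2*pi*y) = bb r pi" for x y
  proof (rule LIMSEQ_le[OF delta_lim[OF r_def B0] delta_lim[OF r_def B0]])
    show "\<exists>N. \<forall>n\<ge>N. r * (\<Prod>m=1..Suc n. bb r (2*pi*x) m)^12 \<le> r * (\<Prod>m=1..Suc n. bb r (2*pi*y) m)^12"
    proof (intro exI allI impI)
      fix n :: nat assume n: "2 \<le> n"
      have "(\<Prod>m=1..Suc n. bb r (2*pi*x) m) \<le> (\<Prod>m=1..Suc n. bb r pi m)"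
        using main_finite[OF r0 r1, of "Suc n"] n by simp
      moreover have "0 \<le> (\<Prod>m=1..Suc n. bb r (2*pi*x) m)"
        using r0 by (intro prod_nonneg bb_nonneg) auto
      ultimately have "(\<Prod>m=1..Suc n. bb r (2*pi*x) m)^12 \<le> (\<Prod>m=1..Suc n. bb r pi m)^12"
        by (rule power_mono)
      then show "r * (\<Prod>m=1..Suc n. bb r (2*pi*x) m)^12 \<le> r * (\<Prod>m=1..Suc n. bb r (2*pi*y) m)^12"
        unfolding y using r0 by (intro mult_left_mono) auto
    qed
  qed
  have h1: "bb r (2*pi*(1/2)) = bb r pi" by simp
  have h2: "bb r (2*pi*(-1/2)) = bb r pi" using bb_minus_pi by auto
  show ?thesis using gen[OF h1] gen[OF h2] by blast
qed


end
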